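(* There is a constant $0<c<1$ such that $$\frac{\|F_{1,t}(z,w)\|}{\|(z,w)\|^4}\ge c|t|^2$$ for all $t\in\mathbb{C}$ with $|t|<1/16$ and all $(z,w)\ne(0,0)$. Consequently, for any marked point with associated maps $F_n$ and degree $d$ as in the context, for all $n\ge1$, $i\ge0$ and all $t$ with $|t|<1/16$, $$\frac{1}{\deg F_{n+i}}\log\|F_{n+i}(1,t)\|-\frac{1}{\deg F_n}\log\|F_n(1,t)\|\ge\frac{\log c}{4^{n-1}d}.$$
   Context: $F_{t_1,t_2}(z,w)=\big((t_1w^2-t_2z^2)^2,\;4t_2zw(w-z)(t_1w-t_2z)\big)$, so $F_{1,t}(z,w)=\big((w^2-tz^2)^2,\;4tzw(w-z)(w-tz)\big)$. $\|(z,w)\|=\max\{|z|,|w|\}$. For $c\in\mathbb{C}(t)\setminus\{0,1,t\}$ with homogeneous lift $C$ (coprime homogeneous polynomials $(c_1,c_2)$ of equal degree with $c(t)=c_1(t,1)/c_2(t,1)$): $F_1=F_{t_1,t_2}(C)/\gcd(F_{t_1,t_2}(C))$, $d=\deg F_1$, $F_{n+1}=F_{t_1,t_2}(F_n)/t_2^2$, $\deg F_n=4^{n-1}d$; in particular $F_{n+1}(1,t)=F_{1,t}(F_n(1,t))/t^2$. *)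

theory Defs
  imports "HOL-Analysis.Analysis"
begin

definition maxnorm :: "complex \<times> complex \<Rightarrow> real" where
  "maxnorm p = max (norm (fst p)) (norm (snd p))"

definition Fmap :: "complex \<Rightarrow> complex \<Rightarrow> complex \<times> complex \<Rightarrow> complex \<times> complex" where
  "Fmap t1 t2 p = (let z = fst p; w = snd p in
     ((t1 * w^2 - t2 * z^2)^2, 4 * t2 * z * w * (w - z) * (t1 * w - t2 * z)))"

definition hev :: "nat \<Rightarrow> (nat \<Rightarrow> complex) \<Rightarrow> complex \<Rightarrow> complex \<Rightarrow> complex" where
  "hev D a t1 t2 = (\<Sum>k\<le>D. a k * t1 ^ k * t2 ^ (D - k))"

definition is_hom :: "nat \<Rightarrow> (complex \<Rightarrow> complex \<Rightarrow> complex) \<Rightarrow> bool" where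
  "is_hom D f \<longleftrightarrow> (\<exists>a. \<forall>t1 t2. f t1 t2 = hev D a t1 t2)"

definition is_hpoly :: "(complex \<Rightarrow> complex \<Rightarrow> complex) \<Rightarrow> bool" where
  "is_hpoly f \<longleftrightarrow> (\<exists>D. is_hom D f)"

definition hdvd :: "(complex \<Rightarrow> complex \<Rightarrow> complex) \<Rightarrow> (complex \<Rightarrow> complex \<Rightarrow> complex) \<Rightarrow> bool" where
  "hdvd g f \<longleftrightarrow> (\<exists>h. is_hpoly h \<and> (\<forall>t1 t2. f t1 t2 = g t1 t2 * h t1 t2))"

definition hcoprime :: "(complex \<Rightarrow> complex \<Rightarrow> complex) \<Rightarrow> (complex \<Rightarrow> complex \<Rightarrow> complex) \<Rightarrow> bool" where
  "hcoprime f1 f2 \<longleftrightarrow>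
     \<not> (\<exists>g E. E \<ge> 1 \<and> is_hom E g \<and> g \<noteq> (\<lambda>_ _. 0) \<and> hdvd g f1 \<and> hdvd g f2)"

text \<open>Data of a marked point c = c1(t,1)/c2(t,1) in C(t) minus {0,1,t}, with homogeneous
  lift C = (c1,c2) of degree m, and the associated sequence F_n (n \<ge> 1) of degree 4^(n-1) d:
  F_1 = F_{t1,t2}(C)/gcd(F_{t1,t2}(C)) and F_{n+1} = F_{t1,t2}(F_n)/t2^2.\<close>
definition marked_seq ::
  "(complex \<Rightarrow> complex \<Rightarrow> complex) \<Rightarrow> (complex \<Rightarrow> complex \<Rightarrow> complex) \<Rightarrow> nat \<Rightarrow>
   (nat \<Rightarrow> complex \<Rightarrow> complex \<Rightarrow> complex \<times> complex) \<Rightarrow> nat \<Rightarrow> bool" where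
  "marked_seq c1 c2 m Fs d \<longleftrightarrow>
     \<comment> \<open>homogeneous lift, coprime, equal degree\<close>
     is_hom m c1 \<and> is_hom m c2 \<and> c1 \<noteq> (\<lambda>_ _. 0) \<and> c2 \<noteq> (\<lambda>_ _. 0) \<and> hcoprime c1 c2 \<and>
     \<comment> \<open>c \<notin> {0, 1, t} as elements of C(t), where c(t) = c1(t,1)/c2(t,1)\<close>
     (\<lambda>x. c1 x 1) \<noteq> (\<lambda>x. 0) \<and>
     (\<lambda>x. c1 x 1) \<noteq> (\<lambda>x. c2 x 1) \<and>
     (\<lambda>x. c1 x 1) \<noteq> (\<lambda>x. x * c2 x 1) \<and>
     \<comment> \<open>F_1 = F(C)/gcd(F(C)), homogeneous of degree d\<close>
     is_hom d (\<lambda>t1 t2. fst (Fs 1 t1 t2)) \<and> is_hom d (\<lambda>t1 t2. snd (Fs 1 t1 t2)) \<and>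
     hcoprime (\<lambda>t1 t2. fst (Fs 1 t1 t2)) (\<lambda>t1 t2. snd (Fs 1 t1 t2)) \<and>
     (\<exists>G. is_hpoly G \<and> G \<noteq> (\<lambda>_ _. 0) \<and>
        (\<forall>t1 t2. Fmap t1 t2 (c1 t1 t2, c2 t1 t2) =
                   (G t1 t2 * fst (Fs 1 t1 t2), G t1 t2 * snd (Fs 1 t1 t2)))) \<and>
     \<comment> \<open>F_n homogeneous of degree 4^(n-1) d and F_{n+1} = F(F_n)/t2^2\<close>
     (\<forall>n\<ge>1. is_hom (4 ^ (n - 1) * d) (\<lambda>t1 t2. fst (Fs n t1 t2)) \<and>
             is_hom (4 ^ (n - 1) * d) (\<lambda>t1 t2. snd (Fs n t1 t2)) \<and>
             (\<forall>t1 t2. Fmap t1 t2 (Fs n t1 t2) =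
                 (t2^2 * fst (Fs (n + 1) t1 t2), t2^2 * snd (Fs (n + 1) t1 t2))))"

end

theory Submission imports Defs begin

lemma ms_rec: "marked_seq c1 c2 m Fs d \<Longrightarrow> n \<ge> 1 \<Longrightarrow>
   Fmap t1 t2 (Fs n t1 t2) = (t2^2 * fst (Fs (n + 1) t1 t2), t2^2 * snd (Fs (n + 1) t1 t2))"
  unfolding marked_seq_def by blast
lemma ms_hom: "marked_seq c1 c2 m Fs d \<Longrightarrow> n \<ge> 1 \<Longrightarrow>
   is_hom (4 ^ (n - 1) * d) (\<lambda>t1 t2. fst (Fs n t1 t2)) \<and> is_hom (4 ^ (n - 1) * d) (\<lambda>t1 t2. snd (Fs n t1 t2))"
  unfolding marked_seq_def by blast
lemma ms_F1: "marked_seq c1 c2 m Fs d \<Longrightarrow>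
   is_hom d (\<lambda>t1 t2. fst (Fs 1 t1 t2)) \<and> is_hom d (\<lambda>t1 t2. snd (Fs 1 t1 t2)) \<and>
     hcoprime (\<lambda>t1 t2. fst (Fs 1 t1 t2)) (\<lambda>t1 t2. snd (Fs 1 t1 t2))"
  unfolding marked_seq_def by blast

lemma F_lower:
  fixes t :: complex and p :: "complex \<times> complex"
  assumes ht: "norm t < 1/16"
  shows "maxnorm (Fmap 1 t p) \<ge> 1/4 * norm t ^ 2 * maxnorm p ^ 4"
proof -
  obtain z w where p: "p = (z, w)" by (cases p)
  define x where "x = norm z"
  define y where "y = norm w"
  define s where "s = norm t"
  define M where "M = max x y"
  define A where "A = norm (w^2 - t*z^2)"
  define B where "B = norm (4*t*z*w*(w-z)*(w-t*z))"
  have mn: "maxnorm (Fmap 1 t p) = max (A^2) B"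
    by (simp add: p maxnorm_def Fmap_def A_def B_def norm_power)
  have Mp: "maxnorm p = M" by (simp add: p maxnorm_def M_def x_def y_def)
  have s0: "0 \<le> s" "s < 1/16" using ht by (auto simp: s_def)
  have x0: "0 \<le> x" and y0: "0 \<le> y" by (auto simp: x_def y_def)
  have A0: "0 \<le> A" by (simp add: A_def)
  show ?thesis
  proof (cases "A \<ge> s * M^2 / 2")
    case True
    have "(s * M^2/2)^2 \<le> A^2"
      using True s0 by (intro power_mono) (auto simp: M_def)
    then have "1/4 * s^2 * M^4 \<le> A^2" by (simp add: power2_eq_square power4_eq_xxxx field_simps)
    then show ?thesis unfolding mn Mp s_def by (simp add: s_def)
  next
    case False
    then have AM: "A < s * M^2/2" by simp
    have t1: "y^2 \<le> s * x^2 + A"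
    proof -
      have "norm (w^2) \<le> norm (w^2 - t*z^2) + norm (t*z^2)" using norm_triangle_ineq[of "w^2 - t*z^2" "t*z^2"] by simp
      then show ?thesis by (simp add: y_def x_def s_def A_def norm_mult norm_power)
    qed
    have t2: "s * x^2 \<le> A + y^2"
    proof -
      have "norm (t*z^2) \<le> norm (w^2 - t*z^2) + norm (w^2)"
        using norm_triangle_ineq4[of "w^2" "w^2 - t*z^2"] by (simp add: norm_minus_commute)
      then show ?thesis by (simp add: y_def x_def s_def A_def norm_mult norm_power)
    qed
    have M0: "M \<ge> 0" using x0 by (simp add: M_def)
    have Mpos: "M > 0"
    proof (rule ccontr)
      assume "\<not> M > 0" then have "M = 0" using M0 by simp
      then show False using AM A0 by simp
    qed
    have xM: "x \<le> M" "y \<le> M" by (auto simp: M_def)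
    have sxM: "s * x^2 \<le> s * M^2" using xM x0 s0 by (intro mult_left_mono power_mono) auto
    have sM: "s * M^2 \<le> (1/16) * M^2" using s0 by (intro mult_right_mono) auto
    have M2: "M^2 > 0" using Mpos by simp
    have "y^2 < M^2/4" using t1 AM sxM sM M2 by linarith
    then have "y^2 < (M/2)^2" by (simp add: power_divide)
    then have yM: "y < M/2" using Mpos by (intro power_less_imp_less_base[of y 2 "M/2"]) auto
    have xM': "x = M"
    proof (rule ccontr)
      assume "x \<noteq> M" then have "M = y" by (auto simp: M_def max_def split: if_splits)
      then show False using yM Mpos by simp
    qed
    have y2: "y^2 > s * M^2/2" using t2 AM xM' by simp
    have "norm (w - z) \<ge> x - y" using norm_triangle_ineq2[of z w]
      by (simp add: x_def y_def norm_minus_commute)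
    then have wz: "norm (w - z) \<ge> M/2" using xM' yM by simp
    have "norm (w - t*z) \<ge> y - s*x" using norm_triangle_ineq2[of w "t*z"]
      by (simp add: x_def y_def s_def norm_mult)
    then have wtz0: "norm (w - t*z) \<ge> y - s*M" using xM' by simp
    have "(2 * s * M)^2 \<le> s*M^2/2"
    proof -
      have "(2 * s * M)^2 = 4 * s * (s * M^2)" by (simp add: power2_eq_square)
      also have "\<dots> \<le> (1/2) * (s*M^2)" using s0 by (intro mult_right_mono) auto
      finally show ?thesis by simp
    qed
    then have "(2 * s * M)^2 < y^2" using y2 by simp
    then have "2 * s * M < y" using y0 by (rule power_less_imp_less_base)
    then have wtz: "norm (w - t*z) \<ge> y/2" using wtz0 by simp
    have "B = 4 * s * x * y * norm (w-z) * norm (w-t*z)"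
      by (simp add: B_def norm_mult s_def x_def y_def)
    also have "\<dots> \<ge> (4 * s * M * y) * (M/2) * (y/2)"
      using wz wtz xM' s0 y0 Mpos
      by (intro mult_mono) (auto intro!: mult_nonneg_nonneg)
    finally have "B \<ge> s*M^2 * y^2" by (simp add: power2_eq_square field_simps)
    moreover have "s*M^2 * y^2 \<ge> s*M^2 * (s*M^2/2)"
      using y2 s0 by (intro mult_left_mono) auto
    moreover have "s*M^2 * (s*M^2/2) = 1/2 * (s^2 * M^4)" by (simp add: power2_eq_square power4_eq_xxxx)
    moreover have "s^2 * M^4 \<ge> 0" by simp
    ultimately have "B \<ge> 1/4 * s^2 * M^4" by linarith
    then show ?thesis unfolding mn Mp s_def by simp
  qed
qed

lemma hom_cont: "is_hom D f \<Longrightarrow> isCont (\<lambda>t. f 1 t) t0"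
proof -
  assume "is_hom D f"
  then obtain a where a: "\<And>t1 t2. f t1 t2 = hev D a t1 t2" unfolding is_hom_def by blast
  have "(\<lambda>t. f 1 t) = (\<lambda>t. \<Sum>k\<le>D. a k * 1 ^ k * t ^ (D - k))" by (simp add: a hev_def)
  then show ?thesis by (simp add: continuous_intros)
qed

lemma L_cont: "marked_seq c1 c2 m Fs d \<Longrightarrow> n \<ge> 1 \<Longrightarrow> isCont (\<lambda>t. maxnorm (Fs n 1 t)) t0"
proof -
  assume a: "marked_seq c1 c2 m Fs d" "n \<ge> 1"
  have "isCont (\<lambda>t. fst (Fs n 1 t)) t0" "isCont (\<lambda>t. snd (Fs n 1 t)) t0"
    using ms_hom[OF a] hom_cont by blast+
  then have "isCont (\<lambda>t. norm (fst (Fs n 1 t))) t0" "isCont (\<lambda>t. norm (snd (Fs n 1 t))) t0"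
    by (auto intro: isCont_norm)
  from continuous_max[OF this] show ?thesis unfolding maxnorm_def .
qed

lemma step_nz: assumes ms: "marked_seq c1 c2 m Fs d" and n: "n \<ge> 1" and t: "norm t < 1/16" "t \<noteq> 0"
  shows "maxnorm (Fs (n+1) 1 t) \<ge> maxnorm (Fs n 1 t) ^ 4 / 4"
    and "maxnorm (Fs n 1 t) = 0 \<Longrightarrow> maxnorm (Fs (n+1) 1 t) = 0"
proof -
  have e: "Fmap 1 t (Fs n 1 t) = (t^2 * fst (Fs (n + 1) 1 t), t^2 * snd (Fs (n + 1) 1 t))"
    by (rule ms_rec[OF ms n])
  have mx: "maxnorm (Fmap 1 t (Fs n 1 t)) = norm t ^ 2 * maxnorm (Fs (n+1) 1 t)"
    unfolding e maxnorm_def by (simp add: norm_mult norm_power max_mult_distrib_left)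
  have h: "norm t ^ 2 * (maxnorm (Fs n 1 t) ^ 4 / 4) \<le> norm t ^ 2 * maxnorm (Fs (n+1) 1 t)"
    using F_lower[OF t(1), of "Fs n 1 t"] mx by simp
  have pos: "norm t ^ 2 > 0" using t by simp
  from h show "maxnorm (Fs (n+1) 1 t) \<ge> maxnorm (Fs n 1 t) ^ 4 / 4"
    by (simp only: mult_le_cancel_left_pos[OF pos])
  assume z: "maxnorm (Fs n 1 t) = 0"
  then have "Fs n 1 t = (0, 0)" unfolding maxnorm_def
    by (metis max.cobounded1 max.cobounded2 norm_le_zero_iff prod.collapse)
  then have "maxnorm (Fmap 1 t (Fs n 1 t)) = 0" by (simp add: Fmap_def maxnorm_def)
  then show "maxnorm (Fs (n+1) 1 t) = 0" using mx t by simp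
qed

lemma step_le: assumes ms: "marked_seq c1 c2 m Fs d" and n: "n \<ge> 1" and t: "norm t < 1/16"
  shows "maxnorm (Fs (n+1) 1 t) \<ge> maxnorm (Fs n 1 t) ^ 4 / 4"
proof (cases "t = 0")
  case False then show ?thesis using step_nz[OF ms n t] by blast
next
  case True
  let ?f = "\<lambda>t. maxnorm (Fs (n+1) 1 t)"
  let ?g = "\<lambda>t. maxnorm (Fs n 1 t) ^ 4 / 4"
  have f: "(?f \<longlongrightarrow> ?f 0) (at 0)" using L_cont[OF ms, of "n+1" 0] n
    by (simp add: isCont_def)
  have "isCont ?g 0" using L_cont[OF ms n, of 0] by (intro continuous_intros) auto
  then have g: "(?g \<longlongrightarrow> ?g 0) (at 0)" by (simp add: isCont_def)
  have ev: "eventually (\<lambda>x. ?g x \<le> ?f x) (at (0::complex))"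
    using step_nz(1)[OF ms n] by (auto simp: eventually_at dist_norm intro!: exI[of _ "1/16"])
  have "?g 0 \<le> ?f 0" by (rule tendsto_le[OF _ f g ev]) simp
  then show ?thesis using True by simp
qed

lemma hom_zero_dvd: assumes "is_hom D f" "f 1 0 = 0" shows "hdvd (\<lambda>t1 t2. t2) f"
proof -
  obtain a where a: "\<And>t1 t2. f t1 t2 = hev D a t1 t2" using assms(1) unfolding is_hom_def by blast
  show ?thesis
  proof (cases D)
    case 0
    then have "f = (\<lambda>_ _. 0)" using assms(2) a by (auto simp: hev_def fun_eq_iff)
    moreover have "is_hpoly (\<lambda>_ _. 0::complex)"
      unfolding is_hpoly_def is_hom_def by (rule exI[of _ 0], rule exI[of _ "\<lambda>_. 0"]) (simp add: hev_def)
    ultimately show ?thesis unfolding hdvd_def by (intro exI[of _ "\<lambda>_ _. 0"]) auto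
  next
    case (Suc k)
    have sp: "hev D a t1 t2 = t2 * hev k a t1 t2 + a (Suc k) * t1 ^ Suc k" for t1 t2
    proof -
      have "hev D a t1 t2 = (\<Sum>j\<le>k. a j * t1 ^ j * t2 ^ (Suc k - j)) + a (Suc k) * t1 ^ Suc k"
        by (simp add: hev_def Suc)
      also have "(\<Sum>j\<le>k. a j * t1 ^ j * t2 ^ (Suc k - j)) = t2 * hev k a t1 t2"
        unfolding hev_def sum_distrib_left
        by (rule sum.cong) (auto simp: Suc_diff_le)
      finally show ?thesis .
    qed
    have "a (Suc k) = 0" using assms(2) a[of 1 0] sp[of 1 0] by simp
    then have "\<forall>t1 t2. f t1 t2 = t2 * hev k a t1 t2" using a sp by simp
    moreover have "is_hpoly (hev k a)" unfolding is_hpoly_def is_hom_def by blast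
    ultimately show ?thesis unfolding hdvd_def by blast
  qed
qed

lemma L1_pos: assumes ms: "marked_seq c1 c2 m Fs d" shows "maxnorm (Fs 1 1 0) > 0"
proof (rule ccontr)
  assume "\<not> maxnorm (Fs 1 1 0) > 0"
  then have "fst (Fs 1 1 0) = 0" "snd (Fs 1 1 0) = 0" unfolding maxnorm_def
    by (smt (verit) max.cobounded1 max.cobounded2 norm_le_zero_iff)+
  then have "hdvd (\<lambda>t1 t2. t2) (\<lambda>t1 t2. fst (Fs 1 t1 t2))" "hdvd (\<lambda>t1 t2. t2) (\<lambda>t1 t2. snd (Fs 1 t1 t2))"
    using ms_F1[OF ms] by (auto intro: hom_zero_dvd)
  moreover have "is_hom 1 (\<lambda>t1 t2::complex. t2)"
    unfolding is_hom_def hev_def by (rule exI[of _ "\<lambda>k. if k = 0 then 1 else 0"]) simp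
  moreover have "(\<lambda>t1 t2::complex. t2) \<noteq> (\<lambda>_ _. 0)" by (metis one_neq_zero)
  ultimately show False using ms_F1[OF ms] unfolding hcoprime_def by blast
qed

lemma L0_pos: assumes ms: "marked_seq c1 c2 m Fs d" and n: "n \<ge> 1" shows "maxnorm (Fs n 1 0) > 0"
  using n
proof (induction n rule: dec_induct)
  case base then show ?case using L1_pos[OF ms] by simp
next
  case (step k)
  have "maxnorm (Fs (k+1) 1 0) \<ge> maxnorm (Fs k 1 0) ^ 4 / 4" using step.hyps by (intro step_le[OF ms]) auto
  moreover have "maxnorm (Fs k 1 0) ^ 4 / 4 > 0" using step.IH by simp
  ultimately show ?case by (metis Suc_eq_plus1 less_le_trans)
qed

lemma logpart:
  assumes ms: "marked_seq c1 c2 m Fs d" and n: "n \<ge> 1" and t: "norm t < 1/16"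
  shows "ln (maxnorm (Fs (n + i) 1 t)) / real (4 ^ (n + i - 1) * d)
            - ln (maxnorm (Fs n 1 t)) / real (4 ^ (n - 1) * d)
          \<ge> ln (1/4) / real (4 ^ (n - 1) * d)"
proof -
  define L where "L k = maxnorm (Fs k 1 t)" for k
  have L0: "L k \<ge> 0" for k unfolding L_def maxnorm_def by (simp add: le_max_iff_disj)
  have ln4: "ln (1/4::real) < 0" by simp
  show ?thesis
  proof (cases "L n = 0")
    case True
    then have t0: "t \<noteq> 0" using L0_pos[OF ms n] L_def by auto
    have "L (n + j) = 0" for j
    proof (induction j)
      case 0 then show ?case using True by simp
    next
      case (Suc j) then show ?case using step_nz(2)[OF ms _ t t0, of "n+j"] n by (simp add: L_def)
    qed
    then show ?thesis using True ln4 unfolding L_def[symmetric]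
      by (simp add: divide_nonpos_nonneg)
  next
    case False
    have Lp: "L n > 0" using L0[of n] False by linarith
    have pos: "L (n + j) > 0" for j
    proof (induction j)
      case 0 then show ?case using Lp by simp
    next
      case (Suc j)
      have "L (n + j + 1) \<ge> L (n+j) ^ 4 / 4" unfolding L_def using n t by (intro step_le[OF ms]) auto
      moreover have "L (n+j) ^ 4 / 4 > 0" using Suc by simp
      ultimately show ?case by (metis add_Suc_right Suc_eq_plus1 less_le_trans)
    qed
    define q where "q k = (4::real) ^ (k - 1)" for k
    define b where "b k = ln (L k) / q k" for k
    define p where "p k = b k - ln 4 / (3 * q k)" for k
    have qpos: "q k > 0" for k by (simp add: q_def)
    have pmono: "p (n + j) \<le> p (n + j + 1)" for j
    proof -
      let ?k = "n + j"
      have qs: "q (?k + 1) = 4 * q ?k" using n by (simp add: q_def power_Suc[symmetric])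
      have "L (?k+1) \<ge> L ?k ^ 4 / 4" unfolding L_def using n t by (intro step_le[OF ms]) auto
      then have "ln (L (?k+1)) \<ge> ln (L ?k ^ 4 / 4)" using pos[of j] by (intro ln_mono) auto
      also have "ln (L ?k ^ 4 / 4) = 4 * ln (L ?k) - ln 4" using pos[of j] by (simp add: ln_div ln_realpow)
      finally have lr: "ln (L (?k+1)) \<ge> 4 * ln (L ?k) - ln 4" .
      have "p (?k+1) = ln (L (?k+1)) / (4 * q ?k) - ln 4 / (12 * q ?k)" unfolding p_def b_def qs by simp
      also have "\<dots> \<ge> (4 * ln (L ?k) - ln 4) / (4 * q ?k) - ln 4 / (12 * q ?k)"
        using lr qpos[of ?k] by (simp add: divide_right_mono)
      also have "(4 * ln (L ?k) - ln 4) / (4 * q ?k) - ln 4 / (12 * q ?k) = p ?k"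
        unfolding p_def b_def using qpos[of ?k] by (simp add: field_simps)
      finally show ?thesis .
    qed
    have "p n \<le> p (n + j)" for j
    proof (induction j)
      case 0 then show ?case by simp
    next
      case (Suc j) then show ?case using pmono[of j] by simp
    qed
    then have "p n \<le> p (n + i)" .
    moreover have "ln 4 / (3 * q (n+i)) \<ge> 0" using qpos[of "n+i"] by simp
    moreover have "ln 4 / (3 * q n) \<le> ln 4 / q n" using qpos[of n] by (simp add: divide_left_mono)
    ultimately have key: "b (n+i) - b n \<ge> - ln 4 / q n" unfolding p_def by (simp add: field_simps)
    show ?thesis
    proof (cases "d = 0")
      case True then show ?thesis by simp
    next
      case False
      then have dp: "real d > 0" by simp
      have "(b (n+i) - b n) / real d \<ge> (- ln 4 / q n) / real d" using divide_right_mono[OF key, of "real d"] dp by simp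
      moreover have "(b (n+i) - b n) / real d = ln (L (n + i)) / real (4 ^ (n + i - 1) * d)
            - ln (L n) / real (4 ^ (n - 1) * d)" unfolding b_def q_def by (simp add: diff_divide_distrib divide_divide_eq_left mult.commute)
      moreover have "(- ln 4 / q n) / real d = ln (1/4) / real (4 ^ (n - 1) * d)"
        unfolding q_def by (simp add: ln_div)
      ultimately show ?thesis unfolding L_def by simp
    qed
  qed
qed

theorem lemma4p4:
  shows "\<exists>c::real. 0 < c \<and> c < 1 \<and>
    (\<forall>t z w. norm t < 1/16 \<longrightarrow> (z, w) \<noteq> (0, 0) \<longrightarrow>
        maxnorm (Fmap 1 t (z, w)) / maxnorm (z, w) ^ 4 \<ge> c * norm t ^ 2) \<and>
    (\<forall>c1 c2 m Fs d. marked_seq c1 c2 m Fs d \<longrightarrow>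
       (\<forall>n i t. n \<ge> 1 \<longrightarrow> norm t < 1/16 \<longrightarrow>
          ln (maxnorm (Fs (n + i) 1 t)) / real (4 ^ (n + i - 1) * d)
            - ln (maxnorm (Fs n 1 t)) / real (4 ^ (n - 1) * d)
          \<ge> ln c / real (4 ^ (n - 1) * d)))"
proof (intro exI[of _ "1/4"] conjI allI impI)
  fix t z w :: complex
  assume t: "norm t < 1/16" and zw: "(z, w) \<noteq> (0, 0)"
  have "maxnorm (z, w) > 0" using zw unfolding maxnorm_def
    by (auto simp: max_def)
  then show "maxnorm (Fmap 1 t (z, w)) / maxnorm (z, w) ^ 4 \<ge> 1/4 * norm t ^ 2"
    using F_lower[OF t, of "(z,w)"] by (simp add: pos_le_divide_eq)
next
  fix c1 c2 m Fs d and n i :: nat and t :: complex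
  assume "marked_seq c1 c2 m Fs d" "n \<ge> 1" "norm t < 1/16"
  then show "ln (maxnorm (Fs (n + i) 1 t)) / real (4 ^ (n + i - 1) * d)
            - ln (maxnorm (Fs n 1 t)) / real (4 ^ (n - 1) * d)
          \<ge> ln (1/4) / real (4 ^ (n - 1) * d)" by (rule logpart)
qed simp_all

end
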